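(* Let $x>1/2$ and define $\rho_x(G)=\max(\rho(G),x)$ for graphs $G$. Then for all edge-neighboring graphs $G,G'$, $|\rho_x(G)-\rho_x(G')|\le\frac{1}{2x-1}$.
   Context: Graphs are simple undirected with vertex set $V$. For nonempty $S\subseteq V$, $\rho(S)=|E(S)|/|S|$ where $E(S)$ is the set of edges with both endpoints in $S$, and $\rho(G)=\max_{\emptyset\ne S\subseteq V}\rho(S)$. Two graphs are edge-neighboring if they have the same vertex set and their edge sets differ in exactly one edge. *)

theory Defs
  imports Complex_Main
begin

definition simple_graph :: "'a set \<Rightarrow> 'a set set \<Rightarrow> bool" where
  "simple_graph V E \<longleftrightarrow> finite V \<and> (\<forall>e\<in>E. e \<subseteq> V \<and> card e = 2)"

definition induced_edges :: "'a set set \<Rightarrow> 'a set \<Rightarrow> 'a set set" where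
  "induced_edges E S = {e \<in> E. e \<subseteq> S}"

definition density :: "'a set set \<Rightarrow> 'a set \<Rightarrow> real" where
  "density E S = real (card (induced_edges E S)) / real (card S)"

definition max_density :: "'a set \<Rightarrow> 'a set set \<Rightarrow> real" where
  "max_density V E = Max {density E S | S. S \<subseteq> V \<and> S \<noteq> {}}"

definition clipped_density :: "real \<Rightarrow> 'a set \<Rightarrow> 'a set set \<Rightarrow> real" where
  "clipped_density x V E = max (max_density V E) x"

definition edge_neighboring :: "'a set set \<Rightarrow> 'a set set \<Rightarrow> bool" where
  "edge_neighboring E E' \<longleftrightarrow> card ((E - E') \<union> (E' - E)) = 1"

end

theory Submission
  imports Defs
begin

lemma md_finite:
  assumes "finite V"
  shows "finite {density E S | S. S \<subseteq> V \<and> S \<noteq> {}}"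
proof -
  have "{density E S | S. S \<subseteq> V \<and> S \<noteq> {}} = density E ` {S. S \<subseteq> V \<and> S \<noteq> {}}" by blast
  moreover have "finite {S. S \<subseteq> V \<and> S \<noteq> {}}" using assms by simp
  ultimately show ?thesis by simp
qed

lemma md_ge:
  assumes "finite V" "S \<subseteq> V" "S \<noteq> {}"
  shows "density E S \<le> max_density V E"
  unfolding max_density_def using md_finite[OF assms(1)] assms by (intro Max_ge) auto

lemma md_attained:
  assumes "finite V" "V \<noteq> {}"
  shows "\<exists>S. S \<subseteq> V \<and> S \<noteq> {} \<and> max_density V E = density E S"
proof -
  have "max_density V E \<in> {density E S | S. S \<subseteq> V \<and> S \<noteq> {}}"
    unfolding max_density_def using md_finite[OF assms(1)] assms by (intro Max_in) auto
  thus ?thesis by blast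
qed

lemma mono_md:
  assumes "finite V" "V \<noteq> {}" "simple_graph V E'" "E \<subseteq> E'"
  shows "max_density V E \<le> max_density V E'"
proof -
  obtain S where S: "S \<subseteq> V" "S \<noteq> {}" "max_density V E = density E S"
    using md_attained[OF assms(1,2)] by blast
  have fS: "finite S" using S assms(1) finite_subset by blast
  have "induced_edges E S \<subseteq> induced_edges E' S" using assms(4) unfolding induced_edges_def by auto
  moreover have "finite (induced_edges E' S)"
  proof -
    have "induced_edges E' S \<subseteq> Pow S" unfolding induced_edges_def by auto
    thus ?thesis using fS finite_subset by blast
  qed
  ultimately have "card (induced_edges E S) \<le> card (induced_edges E' S)" by (simp add: card_mono)
  hence "density E S \<le> density E' S" unfolding density_def
    by (simp add: divide_right_mono)
  also have "\<dots> \<le> max_density V E'" using md_ge[OF assms(1) S(1,2)] .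
  finally show ?thesis using S by simp
qed

lemma key:
  fixes x :: real
  assumes x: "x > 1/2" and V: "V \<noteq> {}" and g: "simple_graph V E'"
    and E': "E' = insert e E" and eE: "e \<notin> E"
  shows "clipped_density x V E' - clipped_density x V E \<le> 1 / (2 * x - 1)"
proof -
  have fV: "finite V" using g unfolding simple_graph_def by simp
  obtain S where S: "S \<subseteq> V" "S \<noteq> {}" "max_density V E' = density E' S"
    using md_attained[OF fV V] by blast
  have fS: "finite S" using S fV finite_subset by blast
  define k where "k = card S"
  have kpos: "k > 0" using fS S(2) k_def by (simp add: card_gt_0_iff)
  have md: "density E S \<le> max_density V E" using md_ge[OF fV S(1,2)] .
  have pos: "2 * x - 1 > 0" using x by simp
  show ?thesis
  proof (cases "density E' S \<le> x")
    case True
    hence "clipped_density x V E' = x" unfolding clipped_density_def using S by simp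
    moreover have "x \<le> clipped_density x V E" unfolding clipped_density_def by simp
    moreover have "1 / (2 * x - 1) > 0" using pos by simp
    ultimately show ?thesis by linarith
  next
    case False
    show ?thesis
    proof (cases "e \<subseteq> S")
      case False
      have "induced_edges E' S = induced_edges E S" unfolding induced_edges_def E' using False by auto
      hence "density E' S = density E S" unfolding density_def by simp
      hence "clipped_density x V E' \<le> clipped_density x V E"
        unfolding clipped_density_def using S md by simp
      moreover have "1 / (2 * x - 1) > 0" using pos by simp
      ultimately show ?thesis by linarith
    next
      case True
      have ie: "induced_edges E' S = insert e (induced_edges E S)"
        unfolding induced_edges_def E' using True by auto
      have sub: "induced_edges E' S \<subseteq> {B. B \<subseteq> S \<and> card B = 2}"
        using g unfolding induced_edges_def simple_graph_def E' by auto
      have fin: "finite (induced_edges E S)"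
      proof -
        have "induced_edges E S \<subseteq> Pow S" unfolding induced_edges_def by auto
        thus ?thesis using fS finite_subset by blast
      qed
      have c1: "card (induced_edges E' S) = card (induced_edges E S) + 1"
        using ie fin eE unfolding induced_edges_def by simp
      have "card (induced_edges E' S) \<le> card {B. B \<subseteq> S \<and> card B = 2}"
        using sub fS by (intro card_mono) auto
      also have "\<dots> = k choose 2" using n_subsets[OF fS] k_def by simp
      finally have cb: "card (induced_edges E' S) \<le> k choose 2" .
      have c2: "2 * (k choose 2) = k * (k - 1)"
        by (induction k) (auto simp: choose_two algebra_simps)
      have "real (2 * (k choose 2)) = real k * (real k - 1)"
        unfolding c2 using kpos by (simp add: of_nat_diff)
      hence "real (k choose 2) = real k * (real k - 1) / 2" by simp
      moreover have "real (card (induced_edges E' S)) \<le> real (k choose 2)"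
        using cb by simp
      ultimately have "real (card (induced_edges E' S)) \<le> real k * (real k - 1) / 2"
        by simp
      hence "density E' S \<le> (real k - 1) / 2" unfolding density_def k_def[symmetric]
        using kpos by (simp add: field_simps)
      with \<open>\<not> density E' S \<le> x\<close> have kx: "real k > 2 * x + 1" by simp
      have d: "density E' S = density E S + 1 / real k"
        unfolding density_def c1 k_def[symmetric] using kpos by (simp add: field_simps)
      have "1 / real k \<le> 1 / (2 * x - 1)" using kx pos by (intro divide_left_mono) auto
      hence "clipped_density x V E' \<le> clipped_density x V E + 1 / (2 * x - 1)"
        unfolding clipped_density_def S(3) d proof -
        have "0 \<le> 1 / (2 * x - 1)" using pos by simp
        thus "max (density E S + 1 / real k) x \<le> max (max_density V E) x + 1 / (2 * x - 1)"
          using md \<open>1 / real k \<le> 1 / (2 * x - 1)\<close> unfolding max_def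
          by (cases "density E S + 1 / real k \<le> x"; cases "max_density V E \<le> x"; simp only: if_True if_False; linarith)
      qed
      thus ?thesis by simp
    qed
  qed
qed

theorem mainTheorem13:
  fixes x :: real and V :: "'a set" and E E' :: "'a set set"
  assumes "x > 1/2"
    and "V \<noteq> {}"
    and "simple_graph V E" and "simple_graph V E'"
    and "edge_neighboring E E'"
  shows "\<bar>clipped_density x V E - clipped_density x V E'\<bar> \<le> 1 / (2 * x - 1)"
proof -
  have fV: "finite V" using assms(3) unfolding simple_graph_def by simp
  obtain e where e: "(E - E') \<union> (E' - E) = {e}"
    using assms(5) unfolding edge_neighboring_def by (rule card_1_singletonE)
  have mono: "clipped_density x V A \<le> clipped_density x V B"
    if "simple_graph V B" "A \<subseteq> B" for A B
    using mono_md[OF fV assms(2) that] unfolding clipped_density_def by simp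
  have h: "\<And>y. (y \<in> E \<and> y \<notin> E') \<or> (y \<in> E' \<and> y \<notin> E) \<longleftrightarrow> y = e"
    using e by (simp add: set_eq_iff)
  show ?thesis
  proof (cases "e \<in> E")
    case True
    have "E = insert e E'"
    proof (rule set_eqI)
      fix y
      show "y \<in> E \<longleftrightarrow> y \<in> insert e E'"
        using h[of y] h[of e] True by auto
    qed
    have "e \<notin> E'" using h[of e] True by auto
    have "clipped_density x V E' \<le> clipped_density x V E"
      by (rule mono[OF assms(3)]) (simp add: \<open>E = insert e E'\<close> subset_insertI)
    moreover have "clipped_density x V E - clipped_density x V E' \<le> 1 / (2 * x - 1)"
      using key[OF assms(1,2,3) \<open>E = insert e E'\<close> \<open>e \<notin> E'\<close>] .
    ultimately show ?thesis by linarith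
  next
    case False
    have "E' = insert e E"
    proof (rule set_eqI)
      fix y
      show "y \<in> E' \<longleftrightarrow> y \<in> insert e E"
        using h[of y] h[of e] False by auto
    qed
    have "e \<notin> E" using False .
    have "clipped_density x V E \<le> clipped_density x V E'"
      by (rule mono[OF assms(4)]) (simp add: \<open>E' = insert e E\<close> subset_insertI)
    moreover have "clipped_density x V E' - clipped_density x V E \<le> 1 / (2 * x - 1)"
      using key[OF assms(1,2,4) \<open>E' = insert e E\<close> \<open>e \<notin> E\<close>] .
    ultimately show ?thesis by linarith
  qed
qed

end
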